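(* Let $R=\mathbb{F}_q+v\mathbb{F}_q+v^2\mathbb{F}_q$ with $v^3=v$, and let $C=vC_1\oplus(1-v)C_2\oplus(1-v^2)C_3$ be a cyclic code of length $n$ over $R$, where $C_1,C_2,C_3$ are cyclic codes of length $n$ over $\mathbb{F}_q$ with $C_i=\langle f_i\rangle\subseteq\mathbb{F}_q[x]/\langle x^n-1\rangle$, $f_i\in\mathbb{F}_q[x]$, $f_i\mid x^n-1$ ($i=1,2,3$). Then, identifying codes with ideals of $R[x]/\langle x^n-1\rangle$, $C=\langle vf_1,(1-v)f_2,(1-v^2)f_3\rangle$ and $|C|=q^{3n-(\deg f_1+\deg f_2+\deg f_3)}$.
   Context: $q$ is a prime power and $R=\mathbb{F}_q[v]/\langle v^3-v\rangle$. $vC_1\oplus(1-v)C_2\oplus(1-v^2)C_3$ denotes $\{va+(1-v)b+(1-v^2)d:a\in C_1,b\in C_2,d\in C_3\}$. A code is cyclic if it is closed under the cyclic shift $(c_0,\dots,c_{n-1})\mapsto(c_{n-1},c_0,\dots,c_{n-2})$; cyclic codes of length $n$ are identified with ideals of $R[x]/\langle x^n-1\rangle$ (resp. $\mathbb{F}_q[x]/\langle x^n-1\rangle$) via $(c_0,\dots,c_{n-1})\mapsto\sum c_ix^i$. *)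

theory Defs
  imports "HOL-Computational_Algebra.Polynomial"
begin

text \<open>An element VR a b c represents a + b v + c v^2, with v^3 = v.\<close>

datatype 'a vring = VR 'a 'a 'a

instantiation vring :: (comm_ring_1) comm_ring_1
begin


definition "0 = VR 0 0 0"
definition "1 = VR 1 0 0"
fun plus_vring :: "'a vring \<Rightarrow> 'a vring \<Rightarrow> 'a vring" where
  "plus_vring (VR a b c) (VR a' b' c') = VR (a + a') (b + b') (c + c')"
fun minus_vring :: "'a vring \<Rightarrow> 'a vring \<Rightarrow> 'a vring" where
  "minus_vring (VR a b c) (VR a' b' c') = VR (a - a') (b - b') (c - c')"
fun uminus_vring :: "'a vring \<Rightarrow> 'a vring" where
  "uminus_vring (VR a b c) = VR (- a) (- b) (- c)"
fun times_vring :: "'a vring \<Rightarrow> 'a vring \<Rightarrow> 'a vring" where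
  "times_vring (VR a b c) (VR a' b' c') =
     VR (a * a') (a * b' + b * a' + b * c' + c * b') (a * c' + b * b' + c * a' + c * c')"

instance
proof
  fix x y z :: "'a vring"
  show "x * y * z = x * (y * z)"
    by (cases x; cases y; cases z) (simp add: algebra_simps)
  show "x * y = y * x"
    by (cases x; cases y) (simp add: algebra_simps)
  show "1 * x = x" by (cases x) (simp add: one_vring_def)
  show "(x + y) * z = x * z + y * z"
    by (cases x; cases y; cases z) (simp add: algebra_simps)
  show "x + y + z = x + (y + z)"
    by (cases x; cases y; cases z) (simp add: algebra_simps)
  show "x + y = y + x" by (cases x; cases y) (simp add: algebra_simps)
  show "0 + x = x" by (cases x) (simp add: zero_vring_def)
  show "- x + x = 0" by (cases x) (simp add: zero_vring_def)
  show "x - y = x + - y" by (cases x; cases y) simp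
  show "(0::'a vring) \<noteq> 1" by (simp add: zero_vring_def one_vring_def)
qed

end

definition vv :: "'a::comm_ring_1 vring" where "vv = VR 0 1 0"
definition emb :: "'a::comm_ring_1 \<Rightarrow> 'a vring" where "emb a = VR a 0 0"

lemma vv_cube: "(vv :: 'a::comm_ring_1 vring) ^ 3 = vv"
  by (simp add: vv_def numeral_3_eq_3 one_vring_def)

text \<open>Codewords are lists of length n; (c_0,...,c_{n-1}) corresponds to \<Sum> c_i x^i = Poly c.\<close>

definition cshift :: "'b list \<Rightarrow> 'b list" where
  "cshift xs = (if xs = [] then [] else last xs # butlast xs)"

definition linear_code :: "nat \<Rightarrow> 'b::comm_ring_1 list set \<Rightarrow> bool" where
  "linear_code n C \<longleftrightarrow> C \<subseteq> {c. length c = n} \<and> replicate n 0 \<in> C \<and>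
     (\<forall>c\<in>C. \<forall>d\<in>C. map2 (+) c d \<in> C) \<and> (\<forall>r. \<forall>c\<in>C. map ((*) r) c \<in> C)"

definition cyclic_code :: "nat \<Rightarrow> 'b::comm_ring_1 list set \<Rightarrow> bool" where
  "cyclic_code n C \<longleftrightarrow> linear_code n C \<and> (\<forall>c\<in>C. cshift c \<in> C)"

text \<open>The ideal of B[x]/(x^n - 1) generated by the polynomials in G, viewed as a set of
  codewords (representatives of degree < n).\<close>
definition ideal_code :: "nat \<Rightarrow> 'b::comm_ring_1 poly list \<Rightarrow> 'b list set" where
  "ideal_code n G = {c. length c = n \<and>
     (\<exists>hs k. length hs = length G \<and>
        Poly c = sum_list (map2 (*) G hs) + k * (monom 1 n - 1))}"

definition vsum_code :: "nat \<Rightarrow> 'a::comm_ring_1 list set \<Rightarrow> 'a list set \<Rightarrow> 'a list set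
    \<Rightarrow> 'a vring list set" where
  "vsum_code n C1 C2 C3 =
     {map (\<lambda>i. vv * emb (a ! i) + (1 - vv) * emb (b ! i) + (1 - vv ^ 2) * emb (d ! i)) [0..<n]
       | a b d. a \<in> C1 \<and> b \<in> C2 \<and> d \<in> C3}"

end

theory Submission
  imports Defs
begin


abbreviation E :: "'a::comm_ring_1 poly \<Rightarrow> 'a vring poly" where "E \<equiv> map_poly emb"

lemma emb0[simp]: "emb 0 = 0" by (simp add: emb_def zero_vring_def)
lemma emb1[simp]: "emb 1 = 1" by (simp add: emb_def one_vring_def)
lemma emb_add[simp]: "emb (a + b) = emb a + emb b" by (simp add: emb_def)
lemma emb_mult[simp]: "emb (a * b) = emb a * emb b" by (simp add: emb_def)
lemma emb_minus[simp]: "emb (a - b) = emb a - emb b" by (simp add: emb_def)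

lemma E_add: "E (p + q) = E p + E q"
  by (rule poly_eqI) (simp add: coeff_map_poly)
lemma E_diff: "E (p - q) = E p - E q"
  by (rule poly_eqI) (simp add: coeff_map_poly)
lemma E_mult: "E (p * q) = E p * E q"
proof (induction p)
  case 0 then show ?case by simp
next
  case (pCons a p)
  then show ?case
    by (simp add: E_add map_poly_smult map_poly_pCons)
qed
lemma E_Q: "E (monom 1 n - 1) = monom 1 n - 1"
  by (simp add: E_diff map_poly_monom)

definition lst :: "nat \<Rightarrow> 'b::zero poly \<Rightarrow> 'b list" where
  "lst n p = map (coeff p) [0..<n]"

lemma lst_Poly: "length c = n \<Longrightarrow> lst n (Poly c) = c"
  by (rule nth_equalityI) (auto simp: lst_def nth_default_nth)

lemma Poly_lst: "degree p < n \<or> p = 0 \<Longrightarrow> Poly (lst n p) = p"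
  by (rule poly_eqI) (auto simp: lst_def nth_default_def coeff_eq_0)

lemma length_lst[simp]: "length (lst n p) = n" by (simp add: lst_def)

lemma degree_Poly_less: "length c = n \<Longrightarrow> n > 0 \<Longrightarrow> degree (Poly c) < n"
proof -
  assume a: "length c = n" "n > 0"
  have "degree (Poly c) \<le> n - 1"
    by (rule degree_le) (use a in \<open>auto simp: nth_default_def\<close>)
  with a show ?thesis by linarith
qed

lemma degree_Q: "n > 0 \<Longrightarrow> degree (monom (1::'b::comm_ring_1) n - 1) = n"
proof -
  assume "n > 0"
  have "degree (monom (1::'b) n - 1) \<le> n"
    by (rule degree_le) (auto simp: coeff_monom)
  moreover have "coeff (monom (1::'b) n - 1) n \<noteq> 0" using \<open>n>0\<close> by simp
  ultimately show ?thesis using le_degree by (metis antisym)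
qed

lemma Poly_map2: "length c = length d \<Longrightarrow> Poly (map2 (+) c d) = Poly c + Poly d"
  by (rule poly_eqI) (simp add: nth_default_def)

lemma Poly_smult: "Poly (map ((*) r) c) = smult r (Poly c)"
  by (rule poly_eqI) (simp add: nth_default_def)

lemma vcomb: "vv * emb a + (1 - vv) * emb b + (1 - vv ^ 2) * emb d = VR (b + d) (a - b) (- d)"
  by (simp add: vv_def emb_def one_vring_def power2_eq_square)

lemma Poly_vsum:
  assumes "length a = n" "length b = n" "length d = n"
  shows "Poly (map (\<lambda>i. vv * emb (a ! i) + (1 - vv) * emb (b ! i) + (1 - vv ^ 2) * emb (d ! i)) [0..<n])
    = smult vv (E (Poly a)) + smult (1 - vv) (E (Poly b)) + smult (1 - vv^2) (E (Poly d))"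
  by (rule poly_eqI) (use assms in \<open>auto simp: nth_default_def coeff_map_poly\<close>)



lemma ideal_code_single:
  fixes f :: "'a::field poly"
  assumes "f dvd monom 1 n - 1"
  shows "ideal_code n [f] = {c. length c = n \<and> f dvd Poly c}"
proof (intro set_eqI iffI)
  fix c assume "c \<in> ideal_code n [f]"
  then obtain hs k where "length hs = 1" and e: "Poly c = sum_list (map2 (*) [f] hs) + k * (monom 1 n - 1)"
    and "length c = n" unfolding ideal_code_def by auto
  then obtain h where "hs = [h]" by (cases hs) auto
  with e have "Poly c = f * h + k * (monom 1 n - 1)" by simp
  then have "f dvd Poly c" using assms by (simp add: dvd_add dvd_mult2)
  then show "c \<in> {c. length c = n \<and> f dvd Poly c}" using \<open>length c = n\<close> by simp
next
  fix c assume "c \<in> {c. length c = n \<and> f dvd Poly c}"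
  then have "length c = n" "f dvd Poly c" by auto
  then obtain g where "Poly c = f * g" by (auto elim: dvdE)
  then show "c \<in> ideal_code n [f]" unfolding ideal_code_def using \<open>length c = n\<close>
    by (auto intro!: exI[of _ "[g]"] exI[of _ 0])
qed

lemma card_single:
  fixes f :: "'a::{finite,field} poly"
  assumes "n > 0" "f dvd monom 1 n - 1"
  shows "card (ideal_code n [f]) = card (UNIV :: 'a set) ^ (n - degree f)"
proof -
  define Q :: "'a poly" where "Q = monom 1 n - 1"
  have Q0: "Q \<noteq> 0" using degree_Q[OF assms(1), where 'b='a] assms(1) unfolding Q_def by auto
  have f0: "f \<noteq> 0" using assms(2) Q0 unfolding Q_def by auto
  have df: "degree f \<le> n" using dvd_imp_degree_le[OF assms(2)] Q0 degree_Q[OF assms(1), where 'b='a]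
    unfolding Q_def by auto
  define m where "m = n - degree f"
  define L where "L = {xs :: 'a list. set xs \<subseteq> UNIV \<and> length xs = m}"
  define h where "h = (\<lambda>xs. lst n (f * Poly xs))"
  have degfx: "degree (f * Poly xs) < n \<or> f * Poly xs = 0" if "length xs = m" for xs
  proof (cases "Poly xs = 0")
    case False
    then have "m > 0" using that by (cases xs) auto
    have "degree (Poly xs) < m" by (rule degree_Poly_less) (use that \<open>m>0\<close> in auto)
    then show ?thesis using degree_mult_le[of f "Poly xs"] df \<open>m>0\<close> unfolding m_def by linarith
  qed simp
  have inj: "inj_on h L"
  proof
    fix xs ys assume "xs \<in> L" "ys \<in> L" "h xs = h ys"
    then have "Poly (h xs) = Poly (h ys)" by simp
    then have "f * Poly xs = f * Poly ys" unfolding h_def using degfx \<open>xs \<in> L\<close> \<open>ys \<in> L\<close>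
      by (simp add: Poly_lst L_def)
    then have "Poly xs = Poly ys" using f0 by simp
    then have "lst m (Poly xs) = lst m (Poly ys)" by simp
    then show "xs = ys" using \<open>xs \<in> L\<close> \<open>ys \<in> L\<close> by (simp add: lst_Poly L_def)
  qed
  have img: "h ` L = {c. length c = n \<and> f dvd Poly c}"
  proof (intro set_eqI iffI)
    fix y assume "y \<in> h ` L"
    then obtain xs where "xs \<in> L" "y = h xs" by blast
    have "length (h xs) = n" by (simp add: h_def)
    moreover have "Poly (h xs) = f * Poly xs" unfolding h_def using degfx \<open>xs \<in> L\<close> by (simp add: Poly_lst L_def)
    ultimately show "y \<in> {c. length c = n \<and> f dvd Poly c}" using \<open>y = h xs\<close> by simp
  next
    fix c assume "c \<in> {c. length c = n \<and> f dvd Poly c}"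
    then have c: "length c = n" "f dvd Poly c" by auto
    then obtain g where g: "Poly c = f * g" by (auto elim: dvdE)
    have dg: "degree g < m \<or> g = 0"
    proof (cases "g = 0")
      case False
      have "degree (Poly c) < n" using degree_Poly_less c assms(1) by blast
      then show ?thesis using False f0 g degree_mult_eq[of f g] unfolding m_def by auto
    qed simp
    have "lst m g \<in> L" by (simp add: L_def)
    moreover have "h (lst m g) = c" unfolding h_def using dg g c by (simp add: Poly_lst) (metis lst_Poly)
    ultimately show "c \<in> h ` L" by force
  qed
  have "card L = card (UNIV :: 'a set) ^ m" unfolding L_def by (rule card_lists_length_eq) simp
  then show ?thesis using card_image[OF inj] img ideal_code_single[OF assms(2)] m_def by simp
qed



lemma ideal_code_singleE:
  assumes "c \<in> ideal_code n [f]"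
  shows "length c = n \<and> (\<exists>h k. Poly c = f * h + k * (monom 1 n - 1))"
proof -
  from assms obtain hs k where "length hs = 1" and e: "Poly c = sum_list (map2 (*) [f] hs) + k * (monom 1 n - 1)"
    and "length c = n" unfolding ideal_code_def by auto
  then obtain h where "hs = [h]" by (cases hs) auto
  with e \<open>length c = n\<close> show ?thesis by auto
qed

lemma lst_mod_in:
  fixes f g :: "'a::field poly"
  assumes "n > 0"
  shows "lst n ((f*g) mod (monom 1 n - 1)) \<in> ideal_code n [f]"
    and "Poly (lst n ((f*g) mod (monom 1 n - 1))) = f*g - ((f*g) div (monom 1 n - 1)) * (monom 1 n - 1)"
proof -
  define Q :: "'a poly" where "Q = monom 1 n - 1"
  have dQ: "degree Q = n" using degree_Q[OF assms] unfolding Q_def by simp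
  then have Q0: "Q \<noteq> 0" using assms by auto
  have "degree ((f*g) mod Q) < n \<or> (f*g) mod Q = 0" using degree_mod_less[OF Q0, of "f*g"] dQ by auto
  then have P: "Poly (lst n ((f*g) mod Q)) = (f*g) mod Q" by (rule Poly_lst)
  also have "\<dots> = f*g - ((f*g) div Q) * Q" by (simp add: mod_div_mult_eq[symmetric] algebra_simps)
  finally show "Poly (lst n ((f*g) mod (monom 1 n - 1))) = f*g - ((f*g) div (monom 1 n - 1)) * (monom 1 n - 1)"
    unfolding Q_def .
  then show "lst n ((f*g) mod (monom 1 n - 1)) \<in> ideal_code n [f]"
    unfolding ideal_code_def
    by (auto intro!: exI[of _ "[g]"] exI[of _ "- ((f*g) div (monom 1 n - 1))"])
qed

fun c0 :: "'a vring \<Rightarrow> 'a" where "c0 (VR a b c) = a"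
fun c1 :: "'a vring \<Rightarrow> 'a" where "c1 (VR a b c) = b"
fun c2 :: "'a vring \<Rightarrow> 'a" where "c2 (VR a b c) = c"

lemma decomp:
  fixes H :: "'a::comm_ring_1 vring poly"
  shows "H = E (map_poly c0 H) + smult vv (E (map_poly c1 H)) + smult (vv^2) (E (map_poly c2 H))"
proof (rule poly_eqI)
  fix i
  have z: "c0 (0::'a vring) = 0" "c1 (0::'a vring) = 0" "c2 (0::'a vring) = 0"
    by (simp_all add: zero_vring_def)
  obtain a b c where "coeff H i = VR a b c" by (cases "coeff H i")
  then show "coeff H i = coeff (E (map_poly c0 H) + smult vv (E (map_poly c1 H)) + smult (vv^2) (E (map_poly c2 H))) i"
    by (simp add: coeff_map_poly z) (simp add: vv_def emb_def power2_eq_square)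
qed

lemma const_mult: "[:s:] * p = smult s p" by simp



theorem theorem12:
  fixes n :: nat
    and f1 f2 f3 :: "'a::{finite, field} poly"
    and C1 C2 C3 :: "'a list set"
    and C :: "'a vring list set"
  assumes "n > 0"
    and "cyclic_code n C1" "cyclic_code n C2" "cyclic_code n C3"
    and "C1 = ideal_code n [f1]" "C2 = ideal_code n [f2]" "C3 = ideal_code n [f3]"
    and "f1 dvd monom 1 n - 1" "f2 dvd monom 1 n - 1" "f3 dvd monom 1 n - 1"
    and "C = vsum_code n C1 C2 C3"
    and "cyclic_code n C"
  shows "C = ideal_code n [[:vv:] * map_poly emb f1, [:1 - vv:] * map_poly emb f2,
                           [:1 - vv ^ 2:] * map_poly emb f3]
         \<and> card C = card (UNIV :: 'a set) ^ (3 * n - (degree f1 + degree f2 + degree f3))"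
proof -
  note n0 = assms(1)
  define Q :: "'a poly" where "Q = monom 1 n - 1"
  define Qv :: "'a vring poly" where "Qv = monom 1 n - 1"
  have EQ: "E Q = Qv" unfolding Q_def Qv_def by (rule E_Q)
  have lin: "linear_code n C1" "linear_code n C2" "linear_code n C3" "linear_code n C"
    using assms(2,3,4,12) unfolding cyclic_code_def by auto
  have len: "\<And>c. c \<in> C \<Longrightarrow> length c = n" using lin(4) unfolding linear_code_def by auto
  have z: "replicate n 0 \<in> C1" "replicate n 0 \<in> C2" "replicate n 0 \<in> C3"
    using lin unfolding linear_code_def by auto
  have lenC: "\<And>c. c \<in> C1 \<Longrightarrow> length c = n" "\<And>c. c \<in> C2 \<Longrightarrow> length c = n"
     "\<And>c. c \<in> C3 \<Longrightarrow> length c = n"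
    using lin unfolding linear_code_def by auto
  define G where "G = [[:vv:] * map_poly emb f1, [:1 - vv:] * map_poly emb f2, [:1 - vv ^ 2:] * map_poly emb f3]"
  define w where "w = (\<lambda>(a::'a list) (b::'a list) (d::'a list). map (\<lambda>i. vv * emb (a ! i) + (1 - vv) * emb (b ! i) + (1 - vv ^ 2) * emb (d ! i)) [0..<n])"
  have Cw: "C = {w a b d | a b d. a \<in> C1 \<and> b \<in> C2 \<and> d \<in> C3}"
    using assms(11) unfolding vsum_code_def w_def by simp
  have Pw: "Poly (w a b d) = smult vv (E (Poly a)) + smult (1 - vv) (E (Poly b)) + smult (1 - vv^2) (E (Poly d))"
    if "a \<in> C1" "b \<in> C2" "d \<in> C3" for a b d
    unfolding w_def by (rule Poly_vsum) (use that lenC in auto)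
  have A: "C \<subseteq> ideal_code n G"
  proof
    fix c assume "c \<in> C"
    then obtain a b d where c: "c = w a b d" "a \<in> C1" "b \<in> C2" "d \<in> C3" using Cw by auto
    obtain h1 k1 where 1: "Poly a = f1 * h1 + k1 * Q" using ideal_code_singleE c(2) assms(5) Q_def by blast
    obtain h2 k2 where 2: "Poly b = f2 * h2 + k2 * Q" using ideal_code_singleE c(3) assms(6) Q_def by blast
    obtain h3 k3 where 3: "Poly d = f3 * h3 + k3 * Q" using ideal_code_singleE c(4) assms(7) Q_def by blast
    have "Poly c = sum_list (map2 (*) G [E h1, E h2, E h3])
       + (smult vv (E k1) + smult (1 - vv) (E k2) + smult (1 - vv^2) (E k3)) * Qv"
      unfolding Pw[OF c(2-4), folded c(1)] 1 2 3 G_def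
      by (simp add: E_add E_mult EQ algebra_simps smult_add_right)
    moreover have "length c = n" using len \<open>c \<in> C\<close> by blast
    ultimately show "c \<in> ideal_code n G" unfolding ideal_code_def Qv_def G_def
      by (auto intro!: exI[of _ "[E h1, E h2, E h3]"])
  qed
  define Cp where "Cp = {p. \<exists>c\<in>C. \<exists>K. p = Poly c + K * Qv}"
  have Cp_add: "p + q \<in> Cp" if hpq: "p \<in> Cp" "q \<in> Cp" for p q
  proof -
    obtain c K where "c \<in> C" "p = Poly c + K * Qv"
      using hpq(1) unfolding Cp_def by blast
    moreover obtain d K' where "d \<in> C" "q = Poly d + K' * Qv"
      using hpq(2) unfolding Cp_def by blast
    moreover have "map2 (+) c d \<in> C" using lin(4) \<open>c \<in> C\<close> \<open>d \<in> C\<close> unfolding linear_code_def by auto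
    moreover have "Poly (map2 (+) c d) = Poly c + Poly d" using len \<open>c \<in> C\<close> \<open>d \<in> C\<close> by (simp add: Poly_map2)
    ultimately show ?thesis unfolding Cp_def
      by (auto intro!: bexI[of _ "map2 (+) c d"] exI[of _ "K + K'"] simp: algebra_simps)
  qed
  have Cp_smult: "smult s p \<in> Cp" if hp: "p \<in> Cp" for p s
  proof -
    obtain c K where "c \<in> C" "p = Poly c + K * Qv" using hp unfolding Cp_def by blast
    moreover have "map ((*) s) c \<in> C" using lin(4) \<open>c \<in> C\<close> unfolding linear_code_def by auto
    ultimately show ?thesis unfolding Cp_def
      by (auto intro!: bexI[of _ "map ((*) s) c"] exI[of _ "smult s K"] simp: Poly_smult smult_add_right)
  qed
  have Cp_Q: "p + K * Qv \<in> Cp" if hp: "p \<in> Cp" for p K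
  proof -
    obtain c K' where "c \<in> C" "p = Poly c + K' * Qv" using hp unfolding Cp_def by blast
    then show ?thesis unfolding Cp_def
      by (auto intro!: bexI[of _ c] exI[of _ "K' + K"] simp: algebra_simps)
  qed
  have Cp_w: "smult vv (E (Poly a)) + smult (1 - vv) (E (Poly b)) + smult (1 - vv^2) (E (Poly d)) \<in> Cp"
    if "a \<in> C1" "b \<in> C2" "d \<in> C3" for a b d
  proof -
    have "w a b d \<in> C" using Cw that by auto
    then show ?thesis unfolding Cp_def using Pw[OF that, symmetric]
      by (auto intro!: bexI[of _ "w a b d"] exI[of _ 0])
  qed
  have gen1: "smult vv (E (f1 * g)) \<in> Cp" for g
  proof -
    let ?a = "lst n ((f1*g) mod Q)"
    have a: "?a \<in> C1" "Poly ?a = f1*g - ((f1*g) div Q) * Q"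
      using lst_mod_in[OF n0, of f1 g] assms(5) unfolding Q_def by auto
    have mem: "smult vv (E (f1*g - ((f1*g) div Q) * Q)) \<in> Cp"
      using Cp_w[OF a(1) z(2) z(3)] a(2) by simp
    have eq: "smult vv (E (f1*g - ((f1*g) div Q) * Q)) + smult vv (E ((f1*g) div Q)) * Qv = smult vv (E (f1 * g))"
      by (simp add: E_diff E_mult EQ smult_diff_right algebra_simps)
    from Cp_Q[OF mem, of "smult vv (E ((f1*g) div Q))"] show ?thesis
      by (simp only: eq)
  qed
  have gen2: "smult (1 - vv) (E (f2 * g)) \<in> Cp" for g
  proof -
    let ?a = "lst n ((f2*g) mod Q)"
    have a: "?a \<in> C2" "Poly ?a = f2*g - ((f2*g) div Q) * Q"
      using lst_mod_in[OF n0, of f2 g] assms(6) unfolding Q_def by auto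
    have mem: "smult (1 - vv) (E (f2*g - ((f2*g) div Q) * Q)) \<in> Cp"
      using Cp_w[OF z(1) a(1) z(3)] a(2) by simp
    have eq: "smult (1 - vv) (E (f2*g - ((f2*g) div Q) * Q)) + smult (1 - vv) (E ((f2*g) div Q)) * Qv = smult (1 - vv) (E (f2 * g))"
      by (simp add: E_diff E_mult EQ smult_diff_right algebra_simps)
    from Cp_Q[OF mem, of "smult (1 - vv) (E ((f2*g) div Q))"] show ?thesis
      by (simp only: eq)
  qed
  have gen3: "smult (1 - vv^2) (E (f3 * g)) \<in> Cp" for g
  proof -
    let ?a = "lst n ((f3*g) mod Q)"
    have a: "?a \<in> C3" "Poly ?a = f3*g - ((f3*g) div Q) * Q"
      using lst_mod_in[OF n0, of f3 g] assms(7) unfolding Q_def by auto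
    have mem: "smult (1 - vv^2) (E (f3*g - ((f3*g) div Q) * Q)) \<in> Cp"
      using Cp_w[OF z(1) z(2) a(1)] a(2) by simp
    have eq: "smult (1 - vv^2) (E (f3*g - ((f3*g) div Q) * Q)) + smult (1 - vv^2) (E ((f3*g) div Q)) * Qv = smult (1 - vv^2) (E (f3 * g))"
      by (simp add: E_diff E_mult EQ smult_diff_right algebra_simps)
    from Cp_Q[OF mem, of "smult (1 - vv^2) (E ((f3*g) div Q))"] show ?thesis
      by (simp only: eq)
  qed
  have genH: "smult s (E f) * H \<in> Cp" if "\<And>g. smult s (E (f * g)) \<in> Cp" for s f H
  proof -
    define A B D where "A = map_poly c0 H" "B = map_poly c1 H" "D = map_poly c2 H"
    have "H = E A + smult vv (E B) + smult (vv^2) (E D)" unfolding A_B_D_def by (rule decomp)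
    then have eq: "smult s (E f) * H = smult s (E (f*A)) + smult vv (smult s (E (f*B))) + smult (vv^2) (smult s (E (f*D)))"
      by (simp add: E_mult algebra_simps)
    show ?thesis unfolding eq by (rule Cp_add[OF Cp_add[OF that Cp_smult[OF that]] Cp_smult[OF that]])
  qed
  have B: "ideal_code n G \<subseteq> C"
  proof
    fix c assume "c \<in> ideal_code n G"
    then have c1: "length c = n" and "\<exists>hs K. length hs = length G \<and> Poly c = sum_list (map2 (*) G hs) + K * Qv"
      unfolding ideal_code_def Qv_def by auto
    then obtain hs K where "length hs = length G" "Poly c = sum_list (map2 (*) G hs) + K * Qv" by blast
    then have c: "length c = n" "length hs = 3"
      "Poly c = sum_list (map2 (*) G hs) + K * Qv" using c1 by (auto simp: G_def)
    obtain h1 t1 where t1: "hs = h1 # t1" using c(2) by (cases hs) auto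
    obtain h2 t2 where t2: "t1 = h2 # t2" using c(2) t1 by (cases t1) auto
    obtain h3 t3 where t3: "t2 = h3 # t3" using c(2) t1 t2 by (cases t2) auto
    have "t3 = []" using c(2) t1 t2 t3 by simp
    then have hs: "hs = [h1, h2, h3]" using t1 t2 t3 by simp
    have "sum_list (map2 (*) G hs) = smult vv (E f1) * h1 + (smult (1-vv) (E f2) * h2 + smult (1-vv^2) (E f3) * h3)"
      unfolding hs G_def by (simp add: const_mult)
    moreover have "smult vv (E f1) * h1 + (smult (1-vv) (E f2) * h2 + smult (1-vv^2) (E f3) * h3) \<in> Cp"
      by (rule Cp_add[OF genH[OF gen1] Cp_add[OF genH[OF gen2] genH[OF gen3]]])
    ultimately have "sum_list (map2 (*) G hs) \<in> Cp" by simp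
    then have "Poly c \<in> Cp" unfolding c(3) by (rule Cp_Q)
    then have "\<exists>c'\<in>C. \<exists>K'. Poly c = Poly c' + K' * Qv" unfolding Cp_def by (rule CollectD)
    then obtain c' K' where c': "c' \<in> C" "Poly c = Poly c' + K' * Qv" by (elim bexE exE)
    have "K' = 0"
    proof (rule ccontr)
      assume "K' \<noteq> 0"
      have dQ: "degree Qv = n" unfolding Qv_def by (rule degree_Q[OF n0])
      have cQ: "coeff Qv n = 1" unfolding Qv_def using n0 by simp
      have "coeff (K' * Qv) (degree K' + n) = lead_coeff K'"
        using coeff_mult_degree_sum[of K' Qv] dQ cQ by simp
      moreover have "K' * Qv = Poly c - Poly c'" using c'(2) by simp
      moreover have "coeff (Poly c - Poly c') (degree K' + n) = 0"
        using c(1) len[OF c'(1)] by (simp add: nth_default_def)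
      ultimately show False using \<open>K' \<noteq> 0\<close> by simp
    qed
    then have pc: "Poly c = Poly c'" using c'(2) by simp
    have "c = lst n (Poly c)" using lst_Poly[OF c(1)] by simp
    also have "\<dots> = lst n (Poly c')" by (simp only: pc)
    also have "\<dots> = c'" using lst_Poly[OF len[OF c'(1)]] .
    finally show "c \<in> C" using c'(1) by simp
  qed
  have inj: "inj_on (\<lambda>(a, b, d). w a b d) (C1 \<times> C2 \<times> C3)"
  proof (rule inj_onI)
    fix x y assume x: "x \<in> C1 \<times> C2 \<times> C3" and y: "y \<in> C1 \<times> C2 \<times> C3"
      and exy: "(\<lambda>(a, b, d). w a b d) x = (\<lambda>(a, b, d). w a b d) y"
    obtain a b d where xa: "x = (a, b, d)" by (cases x) auto
    obtain a' b' d' where ya: "y = (a', b', d')" by (cases y) auto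
    have m: "a \<in> C1" "b \<in> C2" "d \<in> C3" "a' \<in> C1" "b' \<in> C2" "d' \<in> C3"
      using x y xa ya by auto
    have e: "w a b d = w a' b' d'" using exy xa ya by simp
    have "\<forall>i<n. a ! i = a' ! i \<and> b ! i = b' ! i \<and> d ! i = d' ! i"
    proof (intro allI impI)
      fix i assume "i < n"
      then have "w a b d ! i = w a' b' d' ! i" using e by simp
      moreover have "w a b d ! i = VR (b ! i + d ! i) (a ! i - b ! i) (- d ! i)"
        using \<open>i < n\<close> by (simp add: w_def vcomb)
      moreover have "w a' b' d' ! i = VR (b' ! i + d' ! i) (a' ! i - b' ! i) (- d' ! i)"
        using \<open>i < n\<close> by (simp add: w_def vcomb)
      ultimately have "VR (b ! i + d ! i) (a ! i - b ! i) (- d ! i) = VR (b' ! i + d' ! i) (a' ! i - b' ! i) (- d' ! i)"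
        by metis
      then have EE: "b ! i + d ! i = b' ! i + d' ! i \<and> a ! i - b ! i = a' ! i - b' ! i \<and> - d ! i = - d' ! i"
        by (simp only: vring.inject)
      then have e1: "b ! i + d ! i = b' ! i + d' ! i" and e2: "a ! i - b ! i = a' ! i - b' ! i" and e3': "- d ! i = - d' ! i" by blast+
      have e3: "d ! i = d' ! i" using e3' by simp
      have e4: "b ! i = b' ! i" using e1 e3 by (metis add_right_cancel)
      have "a ! i = a' ! i" using e2 e4 by (metis diff_left_imp_eq diff_add_cancel)
      then show "a ! i = a' ! i \<and> b ! i = b' ! i \<and> d ! i = d' ! i" using e3 e4 by blast
    qed
    then have "a = a' \<and> b = b' \<and> d = d'" using m lenC by (auto intro: nth_equalityI)
    then show "x = y" using xa ya by simp
  qed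
  have img: "(\<lambda>(a, b, d). w a b d) ` (C1 \<times> C2 \<times> C3) = C"
  proof
    show "(\<lambda>(a, b, d). w a b d) ` (C1 \<times> C2 \<times> C3) \<subseteq> C" using Cw by auto
    show "C \<subseteq> (\<lambda>(a, b, d). w a b d) ` (C1 \<times> C2 \<times> C3)"
    proof
      fix c assume "c \<in> C"
      then obtain a b d where "c = w a b d" "a \<in> C1" "b \<in> C2" "d \<in> C3" using Cw by blast
      then show "c \<in> (\<lambda>(a, b, d). w a b d) ` (C1 \<times> C2 \<times> C3)"
        by (intro image_eqI[of _ _ "(a, b, d)"]) auto
    qed
  qed
  have "card C = card C1 * card C2 * card C3"
    using card_image[OF inj] img by (simp add: card_cartesian_product)
  moreover have "card C1 = card (UNIV :: 'a set) ^ (n - degree f1)"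
    using card_single[OF n0 assms(8)] assms(5) by simp
  moreover have "card C2 = card (UNIV :: 'a set) ^ (n - degree f2)"
    using card_single[OF n0 assms(9)] assms(6) by simp
  moreover have "card C3 = card (UNIV :: 'a set) ^ (n - degree f3)"
    using card_single[OF n0 assms(10)] assms(7) by simp
  moreover have dQa: "degree (monom 1 n - 1 :: 'a poly) = n" by (rule degree_Q[OF n0])
  moreover have Q0: "(monom 1 n - 1 :: 'a poly) \<noteq> 0" using dQa n0 by (metis degree_0 less_irrefl)
  moreover have "degree f1 \<le> n" "degree f2 \<le> n" "degree f3 \<le> n"
    using dvd_imp_degree_le[OF assms(8) Q0] dvd_imp_degree_le[OF assms(9) Q0] dvd_imp_degree_le[OF assms(10) Q0]
      dQa by simp_all
  ultimately have "card C = card (UNIV :: 'a set) ^ ((n - degree f1) + (n - degree f2) + (n - degree f3))"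
    by (simp only: power_add)
  moreover have "(n - degree f1) + (n - degree f2) + (n - degree f3) = 3 * n - (degree f1 + degree f2 + degree f3)"
    using \<open>degree f1 \<le> n\<close> \<open>degree f2 \<le> n\<close> \<open>degree f3 \<le> n\<close> by linarith
  ultimately have "card C = card (UNIV :: 'a set) ^ (3 * n - (degree f1 + degree f2 + degree f3))"
    by simp
  with A B show ?thesis unfolding G_def by auto
qed

end
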